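(* Let $V=\{1,\dots,p\}$ and let $F:2^V\to\mathbb{R}$ be submodular, nondecreasing, with $F(\varnothing)=0$ and $F(\{k\})>0$ for all $k\in V$. Let $\Omega(w)=f(|w|)$, where $f$ is the Lovász extension of $F$. Then the extreme points of the unit ball $\{w\in\mathbb{R}^p:\Omega(w)\leqslant 1\}$ are exactly the vectors $\frac{1}{F(A)}s$ with $s\in\{-1,0,1\}^p$, $\mathrm{Supp}(s)=A$, and $A$ a stable inseparable set.
   Context: For $w\in\mathbb{R}^p$, $|w|$ is the vector of absolute values of its components and $\mathrm{Supp}(w)=\{j: w_j\neq0\}$. The Lovász extension $f:\mathbb{R}_+^p\to\mathbb{R}$: for $w\in\mathbb{R}_+^p$ with $w_{j_1}\geqslant\cdots\geqslant w_{j_p}\geqslant 0$, $f(w)=\sum_{k=1}^p w_{j_k}[F(\{j_1,\dots,j_k\})-F(\{j_1,\dots,j_{k-1}\})]$. A set $A\subset V$ is stable if every strict superset $B\supsetneq A$ satisfies $F(B)>F(A)$. A nonempty set $A$ is separable if there is a partition of $A$ into $k\geqslant2$ nonempty sets $B_1,\dots,B_k$ with $F(A)=\sum_i F(B_i)$, and inseparable otherwise. *)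

theory Defs
  imports "HOL-Analysis.Analysis" "HOL-Library.Disjoint_Sets"
begin

text \<open>Ground set V = UNIV of a finite index type 'n (so p = CARD('n)); vectors in R^p are real^'n.\<close>

definition submodular :: "('n::finite set \<Rightarrow> real) \<Rightarrow> bool" where
  "submodular F \<longleftrightarrow> (\<forall>A B. F (A \<union> B) + F (A \<inter> B) \<le> F A + F B)"

definition nondecreasing_setfun :: "('n::finite set \<Rightarrow> real) \<Rightarrow> bool" where
  "nondecreasing_setfun F \<longleftrightarrow> (\<forall>A B. A \<subseteq> B \<longrightarrow> F A \<le> F B)"

definition sorting_order :: "real^'n::finite \<Rightarrow> (nat \<Rightarrow> 'n) \<Rightarrow> bool" where
  "sorting_order w \<sigma> \<longleftrightarrow> bij_betw \<sigma> {..<CARD('n)} UNIV \<and>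
     (\<forall>i j. i \<le> j \<longrightarrow> j < CARD('n) \<longrightarrow> w $ (\<sigma> j) \<le> w $ (\<sigma> i))"

text \<open>Lovasz extension (meant for nonnegative w).\<close>
definition lovasz_ext :: "('n::finite set \<Rightarrow> real) \<Rightarrow> real^'n \<Rightarrow> real" where
  "lovasz_ext F w = (let \<sigma> = (SOME \<sigma>. sorting_order w \<sigma>) in
     (\<Sum>k<CARD('n). w $ (\<sigma> k) * (F (\<sigma> ` {..k}) - F (\<sigma> ` {..<k}))))"

definition vabs :: "real^'n::finite \<Rightarrow> real^'n" where
  "vabs w = (\<chi> i. \<bar>w $ i\<bar>)"

definition supp :: "real^'n::finite \<Rightarrow> 'n set" where
  "supp w = {j. w $ j \<noteq> 0}"

definition stable_set :: "('n::finite set \<Rightarrow> real) \<Rightarrow> 'n set \<Rightarrow> bool" where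
  "stable_set F A \<longleftrightarrow> (\<forall>B. A \<subset> B \<longrightarrow> F B > F A)"

definition separable_set :: "('n::finite set \<Rightarrow> real) \<Rightarrow> 'n set \<Rightarrow> bool" where
  "separable_set F A \<longleftrightarrow> A \<noteq> {} \<and>
     (\<exists>P. partition_on A P \<and> card P \<ge> 2 \<and> F A = (\<Sum>B\<in>P. F B))"

definition inseparable_set :: "('n::finite set \<Rightarrow> real) \<Rightarrow> 'n set \<Rightarrow> bool" where
  "inseparable_set F A \<longleftrightarrow> A \<noteq> {} \<and> \<not> separable_set F A"

end

theory Submission
  imports Defs
begin


definition PF :: "('n::finite set \<Rightarrow> real) \<Rightarrow> real^'n \<Rightarrow> bool" where
  "PF F s \<longleftrightarrow> (\<forall>B. sum (\<lambda>i. s$i) B \<le> F B)"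

definition gK :: "('n::finite set \<Rightarrow> real) \<Rightarrow> ('n \<Rightarrow> real) \<Rightarrow> real^'n" where
  "gK F \<kappa> = (\<chi> i. F {j. \<kappa> j \<ge> \<kappa> i} - F {j. \<kappa> j > \<kappa> i})"

definition upper :: "('n \<Rightarrow> real) \<Rightarrow> 'n set \<Rightarrow> bool" where
  "upper \<kappa> U \<longleftrightarrow> (\<forall>i\<in>U. \<forall>j. \<kappa> j > \<kappa> i \<longrightarrow> j \<in> U)"

lemma dimret:
  assumes "submodular F" "X \<subseteq> Y" "m \<notin> Y"
  shows "F (insert m Y) - F Y \<le> F (insert m X) - F X"
proof -
  have "F (insert m X \<union> Y) + F (insert m X \<inter> Y) \<le> F (insert m X) + F Y"
    using assms(1) unfolding submodular_def by blast
  moreover have "insert m X \<union> Y = insert m Y" using assms by auto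
  moreover have "insert m X \<inter> Y = X" using assms by auto
  ultimately show ?thesis by simp
qed

lemma gK_ge: fixes \<kappa> :: "'n \<Rightarrow> real" shows "inj \<kappa> \<Longrightarrow> {j. \<kappa> j \<ge> \<kappa> i} = insert i {j. \<kappa> j > \<kappa> i}"
  by (auto simp: inj_def less_le)

lemma gK_PF:
  fixes F :: "'n::finite set \<Rightarrow> real"
  assumes "inj \<kappa>" "submodular F" "F {} = 0"
  shows "PF F (gK F \<kappa>)"
  unfolding PF_def
proof
  fix B :: "'n set"
  have "finite B" by simp
  then show "sum (\<lambda>i. gK F \<kappa> $ i) B \<le> F B"
  proof (induction B rule: finite_ranking_induct[where f="\<lambda>i. - \<kappa> i"])
    case empty then show ?case using assms by simp
  next
    case (insert x S)
    show ?case
    proof (cases "x \<in> S")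
      case True then show ?thesis using insert by (simp add: insert_absorb)
    next
      case False
      let ?U = "{j. \<kappa> j > \<kappa> x}"
      have sub: "S \<subseteq> ?U"
      proof
        fix y assume "y \<in> S"
        then have "\<kappa> y \<ge> \<kappa> x" "y \<noteq> x" using insert(2) False by force+
        then show "y \<in> ?U" using assms(1) by (auto simp: inj_def less_le)
      qed
      have nx: "x \<notin> ?U" by simp
      have g: "gK F \<kappa> $ x = F (insert x ?U) - F ?U" using gK_ge[OF assms(1)] by (simp add: gK_def)
      have "sum (\<lambda>i. gK F \<kappa> $ i) (insert x S) = gK F \<kappa> $ x + sum (\<lambda>i. gK F \<kappa> $ i) S"
        using False insert by simp
      also have "\<dots> \<le> gK F \<kappa> $ x + F S" using insert by simp
      also have "\<dots> \<le> F (insert x S)" using dimret[OF assms(2) sub nx] g by simp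
      finally show ?thesis .
    qed
  qed
qed

lemma gK_upper:
  fixes F :: "'n::finite set \<Rightarrow> real"
  assumes "inj \<kappa>" "F {} = 0" "upper \<kappa> U"
  shows "sum (\<lambda>i. gK F \<kappa> $ i) U = F U"
proof -
  have "finite U" by simp
  then show ?thesis using assms(3)
  proof (induction U rule: finite_ranking_induct[where f="\<lambda>i. - \<kappa> i"])
    case empty then show ?case using assms by simp
  next
    case (insert x S)
    show ?case
    proof (cases "x \<in> S")
      case True then show ?thesis using insert by (simp add: insert_absorb)
    next
      case False
      have ge: "\<And>y. y \<in> S \<Longrightarrow> \<kappa> y > \<kappa> x"
      proof -
        fix y assume "y \<in> S"
        then have "\<kappa> y \<ge> \<kappa> x" "y \<noteq> x" using insert(2) False by force+
        then show "\<kappa> y > \<kappa> x" using assms(1) by (auto simp: inj_def less_le)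
      qed
      have U: "{j. \<kappa> j > \<kappa> x} = S"
      proof
        show "{j. \<kappa> j > \<kappa> x} \<subseteq> S" using insert.prems unfolding upper_def by auto
        show "S \<subseteq> {j. \<kappa> j > \<kappa> x}" using ge by auto
      qed
      have upS: "upper \<kappa> S"
        unfolding upper_def
      proof (intro ballI allI impI)
        fix i j assume "i \<in> S" "\<kappa> j > \<kappa> i"
        then have "j \<in> insert x S" using insert.prems unfolding upper_def by blast
        moreover have "j \<noteq> x" using ge[OF \<open>i\<in>S\<close>] \<open>\<kappa> j > \<kappa> i\<close> by auto
        ultimately show "j \<in> S" by simp
      qed
      have g: "gK F \<kappa> $ x = F (insert x S) - F S" using gK_ge[OF assms(1)] U by (simp add: gK_def)
      show ?thesis using False insert.IH[OF upS] g insert.hyps by simp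
    qed
  qed
qed

lemma gK_nonneg:
  assumes "nondecreasing_setfun F"
  shows "gK F \<kappa> $ i \<ge> 0"
  using assms unfolding gK_def nondecreasing_setfun_def
  by (simp add: subset_eq)



definition idx :: "(nat \<Rightarrow> 'n::finite) \<Rightarrow> 'n \<Rightarrow> nat" where
  "idx \<sigma> i = inv_into {..<CARD('n)} \<sigma> i"

definition kap :: "(nat \<Rightarrow> 'n::finite) \<Rightarrow> 'n \<Rightarrow> real" where
  "kap \<sigma> i = - real (idx \<sigma> i)"

lemma idx_props:
  fixes \<sigma> :: "nat \<Rightarrow> 'n::finite"
  assumes "bij_betw \<sigma> {..<CARD('n)} UNIV"
  shows "idx \<sigma> i < CARD('n)" "\<sigma> (idx \<sigma> i) = i" "k < CARD('n) \<Longrightarrow> idx \<sigma> (\<sigma> k) = k"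
proof -
  have r: "\<sigma> ` {..<CARD('n)} = UNIV" and inj: "inj_on \<sigma> {..<CARD('n)}"
    using assms by (auto simp: bij_betw_def)
  show "idx \<sigma> i < CARD('n)" unfolding idx_def using inv_into_into[of i \<sigma> "{..<CARD('n)}"] r by auto
  show "\<sigma> (idx \<sigma> i) = i" unfolding idx_def using f_inv_into_f[of i \<sigma> "{..<CARD('n)}"] r by auto
  show "k < CARD('n) \<Longrightarrow> idx \<sigma> (\<sigma> k) = k" unfolding idx_def using inv_into_f_f[OF inj] by auto
qed

lemma kap_inj:
  fixes \<sigma> :: "nat \<Rightarrow> 'n::finite"
  assumes "bij_betw \<sigma> {..<CARD('n)} UNIV"
  shows "inj (kap \<sigma>)"
proof (rule injI)
  fix a b assume "kap \<sigma> a = kap \<sigma> b"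
  then have "idx \<sigma> a = idx \<sigma> b" by (simp add: kap_def)
  then show "a = b" using idx_props(2)[OF assms] by metis
qed

lemma kap_gt:
  fixes \<sigma> :: "nat \<Rightarrow> 'n::finite"
  assumes "bij_betw \<sigma> {..<CARD('n)} UNIV" "k < CARD('n)"
  shows "{j. kap \<sigma> j > kap \<sigma> (\<sigma> k)} = \<sigma> ` {..<k}"
proof
  show "{j. kap \<sigma> j > kap \<sigma> (\<sigma> k)} \<subseteq> \<sigma> ` {..<k}"
  proof
    fix j assume "j \<in> {j. kap \<sigma> j > kap \<sigma> (\<sigma> k)}"
    then have "idx \<sigma> j < k" using idx_props(3)[OF assms] by (simp add: kap_def)
    then show "j \<in> \<sigma> ` {..<k}" using idx_props(2)[OF assms(1), of j] by force
  qed
  show "\<sigma> ` {..<k} \<subseteq> {j. kap \<sigma> j > kap \<sigma> (\<sigma> k)}"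
    using idx_props(3)[OF assms(1)] assms(2) by (auto simp: kap_def)
qed

lemma kap_upper:
  fixes \<sigma> :: "nat \<Rightarrow> 'n::finite"
  assumes "bij_betw \<sigma> {..<CARD('n)} UNIV" "k \<le> CARD('n)"
  shows "upper (kap \<sigma>) (\<sigma> ` {..<k})"
  unfolding upper_def
proof (intro ballI allI impI)
  fix i j assume "i \<in> \<sigma> ` {..<k}" "kap \<sigma> i < kap \<sigma> j"
  then obtain m where m: "m < k" "i = \<sigma> m" by auto
  have "m < CARD('n)" using m assms(2) by simp
  then have "idx \<sigma> i = m" using m idx_props(3)[OF assms(1)] by simp
  then have "idx \<sigma> j < m" using \<open>kap \<sigma> i < kap \<sigma> j\<close> by (simp add: kap_def)
  then have "idx \<sigma> j < k" using m by simp
  then show "j \<in> \<sigma> ` {..<k}" using idx_props(2)[OF assms(1), of j] by (metis image_eqI lessThan_iff)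
qed

lemma gK_sigma:
  fixes \<sigma> :: "nat \<Rightarrow> 'n::finite"
  assumes "bij_betw \<sigma> {..<CARD('n)} UNIV" "k < CARD('n)"
  shows "gK F (kap \<sigma>) $ (\<sigma> k) = F (\<sigma> ` {..k}) - F (\<sigma> ` {..<k})"
proof -
  have "{..k} = insert k {..<k}" by auto
  then have "\<sigma> ` {..k} = insert (\<sigma> k) (\<sigma> ` {..<k})" by simp
  then show ?thesis using gK_ge[OF kap_inj[OF assms(1)]] kap_gt[OF assms] by (simp add: gK_def)
qed

lemma abel:
  fixes G H :: "nat \<Rightarrow> real"
  shows "(\<Sum>k<n. G k * (H (Suc k) - H k)) = (\<Sum>k<n. (G k - G (Suc k)) * H (Suc k)) + G n * H n - G 0 * H 0"
  by (induction n) (simp_all add: algebra_simps)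

lemma dot_sigma:
  fixes \<sigma> :: "nat \<Rightarrow> 'n::finite" and t w :: "real^'n"
  assumes "bij_betw \<sigma> {..<CARD('n)} UNIV"
  shows "(\<Sum>i\<in>UNIV. t$i * w$i) = (\<Sum>k<CARD('n). (if k < CARD('n) then w $ (\<sigma> k) else 0) *
      (sum (\<lambda>i. t$i) (\<sigma> ` {..<Suc k}) - sum (\<lambda>i. t$i) (\<sigma> ` {..<k})))"
proof -
  have "(\<Sum>i\<in>UNIV. t$i * w$i) = (\<Sum>k<CARD('n). t$(\<sigma> k) * w$(\<sigma> k))"
    using sum.reindex_bij_betw[OF assms, of "\<lambda>i. t$i * w$i"] by simp
  also have "\<dots> = (\<Sum>k<CARD('n). (if k < CARD('n) then w $ (\<sigma> k) else 0) *
      (sum (\<lambda>i. t$i) (\<sigma> ` {..<Suc k}) - sum (\<lambda>i. t$i) (\<sigma> ` {..<k})))"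
  proof (rule sum.cong[OF refl])
    fix k assume "k \<in> {..<CARD('n)}"
    then have k: "k < CARD('n)" by simp
    have inj: "inj_on \<sigma> {..<CARD('n)}" using assms by (auto simp: bij_betw_def)
    have "\<sigma> k \<notin> \<sigma> ` {..<k}"
    proof
      assume "\<sigma> k \<in> \<sigma> ` {..<k}"
      then obtain m where "m < k" "\<sigma> m = \<sigma> k" by auto
      then show False using inj k unfolding inj_on_def by (metis lessThan_iff less_trans order_less_irrefl)
    qed
    moreover have "\<sigma> ` {..<Suc k} = insert (\<sigma> k) (\<sigma> ` {..<k})" by (simp add: lessThan_Suc)
    ultimately show "t$(\<sigma> k) * w$(\<sigma> k) = (if k < CARD('n) then w $ (\<sigma> k) else 0) *
      (sum (\<lambda>i. t$i) (\<sigma> ` {..<Suc k}) - sum (\<lambda>i. t$i) (\<sigma> ` {..<k}))" using k by simp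
  qed
  finally show ?thesis .
qed

lemma abel_cmp:
  fixes F :: "'n::finite set \<Rightarrow> real" and \<sigma> :: "nat \<Rightarrow> 'n" and s w :: "real^'n"
  assumes so: "sorting_order w \<sigma>" and w0: "\<And>i. w$i \<ge> 0" and ps: "PF F s"
    and F0: "F {} = 0"
  shows "(\<Sum>i\<in>UNIV. s$i * w$i) \<le> (\<Sum>i\<in>UNIV. gK F (kap \<sigma>) $ i * w$i)"
proof -
  have bij: "bij_betw \<sigma> {..<CARD('n)} UNIV" using so by (simp add: sorting_order_def)
  define G where "G k = (if k < CARD('n) then w $ (\<sigma> k) else 0)" for k
  define Hs where "Hs k = sum (\<lambda>i. s$i) (\<sigma> ` {..<k})" for k
  define Hg where "Hg k = sum (\<lambda>i. gK F (kap \<sigma>) $ i) (\<sigma> ` {..<k})" for k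
  have Hg: "Hg k = F (\<sigma> ` {..<k})" if "k \<le> CARD('n)" for k
    unfolding Hg_def using gK_upper[where F=F and \<kappa>="kap \<sigma>", OF kap_inj[OF bij] F0 kap_upper[OF bij that]] by blast
  have "(\<Sum>i\<in>UNIV. s$i * w$i) = (\<Sum>k<CARD('n). G k * (Hs (Suc k) - Hs k))"
    unfolding G_def Hs_def using dot_sigma[OF bij] by blast
  also have "\<dots> = (\<Sum>k<CARD('n). (G k - G (Suc k)) * Hs (Suc k))"
    using abel[of G Hs "CARD('n)"] by (simp add: G_def[of "CARD('n)"] Hs_def[of 0])
  also have "\<dots> \<le> (\<Sum>k<CARD('n). (G k - G (Suc k)) * Hg (Suc k))"
  proof (rule sum_mono)
    fix k assume "k \<in> {..<CARD('n)}"
    then have k: "k < CARD('n)" by simp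
    have "G (Suc k) \<le> G k"
    proof (cases "Suc k < CARD('n)")
      case True then show ?thesis using so k unfolding G_def sorting_order_def by auto
    next
      case False then show ?thesis using k w0 unfolding G_def by auto
    qed
    moreover have "Hs (Suc k) \<le> Hg (Suc k)" using ps Hg[of "Suc k"] k unfolding PF_def Hs_def by simp
    ultimately show "(G k - G (Suc k)) * Hs (Suc k) \<le> (G k - G (Suc k)) * Hg (Suc k)"
      by (simp add: mult_left_mono)
  qed
  also have "\<dots> = (\<Sum>k<CARD('n). G k * (Hg (Suc k) - Hg k))"
    using abel[of G Hg "CARD('n)"] by (simp add: G_def[of "CARD('n)"] Hg_def[of 0])
  also have "\<dots> = (\<Sum>i\<in>UNIV. gK F (kap \<sigma>) $ i * w$i)"
    unfolding G_def Hg_def using dot_sigma[OF bij] by presburger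
  finally show ?thesis .
qed

lemma sort_exists:
  fixes w :: "real^'n::finite"
  shows "\<exists>\<sigma>. sorting_order w \<sigma>"
proof -
  obtain xs :: "'n list" where xs: "set xs = UNIV" "distinct xs"
    using finite_distinct_list[of "UNIV :: 'n set"] by auto
  define ys where "ys = sort_key (\<lambda>i. - w$i) xs"
  have ys: "set ys = UNIV" "distinct ys" using xs by (simp_all add: ys_def)
  have len: "length ys = CARD('n)" using distinct_card[OF ys(2)] ys(1) by simp
  have bij: "bij_betw ((!) ys) {..<CARD('n)} UNIV"
    using bij_betw_nth[OF ys(2)] len ys(1) by simp
  have srt: "sorted (map (\<lambda>i. - w$i) ys)" unfolding ys_def by (rule sorted_sort_key)
  have "\<forall>i j. i \<le> j \<longrightarrow> j < CARD('n) \<longrightarrow> w $ (ys ! j) \<le> w $ (ys ! i)"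
  proof (intro allI impI)
    fix i j assume "i \<le> j" "j < CARD('n)"
    then have "map (\<lambda>i. - w$i) ys ! i \<le> map (\<lambda>i. - w$i) ys ! j"
      using sorted_nth_mono[OF srt] len by simp
    then show "w $ (ys ! j) \<le> w $ (ys ! i)" using \<open>i \<le> j\<close> \<open>j < CARD('n)\<close> len by simp
  qed
  then show ?thesis using bij unfolding sorting_order_def by blast
qed

lemma lov_sigma0:
  fixes F :: "'n::finite set \<Rightarrow> real" and w :: "real^'n"
  assumes "sorting_order w \<sigma>"
  shows "(\<Sum>k<CARD('n). w $ (\<sigma> k) * (F (\<sigma> ` {..k}) - F (\<sigma> ` {..<k}))) =
         (\<Sum>i\<in>UNIV. gK F (kap \<sigma>) $ i * w$i)"
proof -
  have bij: "bij_betw \<sigma> {..<CARD('n)} UNIV" using assms by (simp add: sorting_order_def)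
  have "(\<Sum>i\<in>UNIV. gK F (kap \<sigma>) $ i * w$i) = (\<Sum>k<CARD('n). gK F (kap \<sigma>) $ (\<sigma> k) * w$(\<sigma> k))"
    using sum.reindex_bij_betw[OF bij, of "\<lambda>i. gK F (kap \<sigma>) $ i * w$i"] by simp
  also have "\<dots> = (\<Sum>k<CARD('n). w $ (\<sigma> k) * (F (\<sigma> ` {..k}) - F (\<sigma> ` {..<k})))"
    using gK_sigma[OF bij] by (intro sum.cong) auto
  finally show ?thesis by simp
qed

lemma lov_some:
  fixes F :: "'n::finite set \<Rightarrow> real" and w :: "real^'n"
  shows "lovasz_ext F w = (\<Sum>i\<in>UNIV. gK F (kap (SOME \<sigma>. sorting_order w \<sigma>)) $ i * w$i)"
    and "sorting_order w (SOME \<sigma>. sorting_order w \<sigma>)"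
proof -
  show so: "sorting_order w (SOME \<sigma>. sorting_order w \<sigma>)"
    using sort_exists[of w] by (metis someI_ex)
  show "lovasz_ext F w = (\<Sum>i\<in>UNIV. gK F (kap (SOME \<sigma>. sorting_order w \<sigma>)) $ i * w$i)"
    unfolding lovasz_ext_def Let_def using lov_sigma0[OF so] by simp
qed

lemma lov_sigma:
  fixes F :: "'n::finite set \<Rightarrow> real" and w :: "real^'n"
  assumes so: "sorting_order w \<sigma>" and w0: "\<And>i. w$i \<ge> 0"
    and sm: "submodular F" and F0: "F {} = 0"
  shows "lovasz_ext F w = (\<Sum>i\<in>UNIV. gK F (kap \<sigma>) $ i * w$i)"
proof -
  let ?s = "SOME \<sigma>. sorting_order w \<sigma>"
  have so0: "sorting_order w ?s" by (rule lov_some(2))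
  have b0: "bij_betw ?s {..<CARD('n)} UNIV" "bij_betw \<sigma> {..<CARD('n)} UNIV"
    using so0 so by (auto simp: sorting_order_def)
  have "(\<Sum>i\<in>UNIV. gK F (kap \<sigma>) $ i * w$i) \<le> (\<Sum>i\<in>UNIV. gK F (kap ?s) $ i * w$i)"
    using abel_cmp[OF so0 w0 gK_PF[OF kap_inj[OF b0(2)] sm F0] F0] .
  moreover have "(\<Sum>i\<in>UNIV. gK F (kap ?s) $ i * w$i) \<le> (\<Sum>i\<in>UNIV. gK F (kap \<sigma>) $ i * w$i)"
    using abel_cmp[OF so w0 gK_PF[OF kap_inj[OF b0(1)] sm F0] F0] .
  ultimately show ?thesis using lov_some(1)[of F w] by linarith
qed

lemma lov_LB:
  fixes F :: "'n::finite set \<Rightarrow> real" and w s :: "real^'n"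
  assumes w0: "\<And>i. w$i \<ge> 0" and ps: "PF F s" and F0: "F {} = 0"
  shows "(\<Sum>i\<in>UNIV. s$i * w$i) \<le> lovasz_ext F w"
  using abel_cmp[OF lov_some(2) w0 ps F0] lov_some(1)[of F w] by simp



lemma sum_ind:
  fixes f :: "'n::finite \<Rightarrow> real"
  shows "(\<Sum>i\<in>UNIV. f i * (if i \<in> S then c else 0)) = c * sum f S"
proof -
  have "(\<Sum>i\<in>UNIV. f i * (if i \<in> S then c else 0)) = (\<Sum>i\<in>UNIV. if i \<in> S then f i * c else 0)"
    by (intro sum.cong) auto
  also have "\<dots> = (\<Sum>i\<in>S. f i * c)" by (simp add: sum.If_cases Int_def)
  finally show ?thesis by (simp add: sum_distrib_left mult.commute)
qed

lemma sum_supp: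
  fixes f :: "'n::finite \<Rightarrow> real"
  assumes "\<And>i. i \<notin> S \<Longrightarrow> f i = 0"
  shows "(\<Sum>i\<in>UNIV. f i) = sum f S"
  by (rule sum.mono_neutral_right) (use assms in auto)

lemma sorted_upper:
  fixes v :: "real^'n::finite"
  assumes "sorting_order v \<sigma>"
  shows "upper (kap \<sigma>) {i. v$i \<ge> \<theta>}"
  unfolding upper_def
proof (intro ballI allI impI)
  fix i j assume i: "i \<in> {i. v$i \<ge> \<theta>}" and "kap \<sigma> i < kap \<sigma> j"
  have bij: "bij_betw \<sigma> {..<CARD('n)} UNIV" using assms by (simp add: sorting_order_def)
  have "idx \<sigma> j \<le> idx \<sigma> i" using \<open>kap \<sigma> i < kap \<sigma> j\<close> by (simp add: kap_def)
  then have "v $ (\<sigma> (idx \<sigma> i)) \<le> v $ (\<sigma> (idx \<sigma> j))"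
    using assms idx_props(1)[OF bij, of i] unfolding sorting_order_def by blast
  then have "v$i \<le> v$j" using idx_props(2)[OF bij] by simp
  then show "j \<in> {i. v$i \<ge> \<theta>}" using i by simp
qed

lemma LI:
  fixes F :: "'n::finite set \<Rightarrow> real"
  assumes "c \<ge> 0" "submodular F" "F {} = 0"
  shows "lovasz_ext F (\<chi> i. if i \<in> S then c else 0) = c * F S"
proof -
  let ?v = "(\<chi> i. if i \<in> S then c else 0) :: real^'n"
  obtain \<sigma> where so: "sorting_order ?v \<sigma>" using sort_exists by blast
  have bij: "bij_betw \<sigma> {..<CARD('n)} UNIV" using so by (simp add: sorting_order_def)
  have "lovasz_ext F ?v = (\<Sum>i\<in>UNIV. gK F (kap \<sigma>) $ i * ?v $ i)"
    using lov_sigma[OF so _ assms(2,3)] assms(1) by simp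
  also have "\<dots> = c * sum (\<lambda>i. gK F (kap \<sigma>) $ i) S" using sum_ind by simp
  also have "\<dots> = c * F S"
  proof (cases "c = 0")
    case False
    then have "S = {i. ?v$i \<ge> c}" using assms(1) by auto
    then have "upper (kap \<sigma>) S" using sorted_upper[OF so] by metis
    then show ?thesis using gK_upper[where F=F and \<kappa>="kap \<sigma>", OF kap_inj[OF bij] assms(3)] by simp
  qed simp
  finally show ?thesis .
qed

lemma lov_scale:
  fixes F :: "'n::finite set \<Rightarrow> real" and w :: "real^'n"
  assumes "c \<ge> 0" "\<And>i. w$i \<ge> 0" "submodular F" "F {} = 0"
  shows "lovasz_ext F (c *\<^sub>R w) = c * lovasz_ext F w"
proof -
  obtain \<sigma> where so: "sorting_order w \<sigma>" using sort_exists by blast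
  have so2: "sorting_order (c *\<^sub>R w) \<sigma>" using so assms(1)
    unfolding sorting_order_def by (auto intro: mult_left_mono)
  show ?thesis using lov_sigma[OF so assms(2-4)] lov_sigma[OF so2 _ assms(3,4)] assms(1,2)
    by (simp add: sum_distrib_left algebra_simps)
qed

lemma lov_add:
  fixes F :: "'n::finite set \<Rightarrow> real" and u v :: "real^'n"
  assumes "sorting_order u \<sigma>" "sorting_order v \<sigma>" "\<And>i. u$i \<ge> 0" "\<And>i. v$i \<ge> 0"
    "submodular F" "F {} = 0"
  shows "lovasz_ext F (u + v) = lovasz_ext F u + lovasz_ext F v"
proof -
  have so: "sorting_order (u + v) \<sigma>" using assms(1,2)
    unfolding sorting_order_def by (auto intro: add_mono)
  have "\<And>i. (u+v)$i \<ge> 0" using assms(3,4) by (simp add: add_nonneg_nonneg)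
  then show ?thesis using lov_sigma[OF so _ assms(5,6)] lov_sigma[OF assms(1,3,5,6)] lov_sigma[OF assms(2,4,5,6)]
    by (simp add: sum.distrib algebra_simps)
qed

lemma r_exists: "\<exists>r::'n::finite \<Rightarrow> real. inj r \<and> (\<forall>i. 0 \<le> r i \<and> r i < 1)"
proof -
  obtain \<sigma> :: "nat \<Rightarrow> 'n" where so: "sorting_order 0 \<sigma>" using sort_exists by blast
  have bij: "bij_betw \<sigma> {..<CARD('n)} UNIV" using so by (simp add: sorting_order_def)
  define r where "r i = real (idx \<sigma> i) / real CARD('n)" for i
  have "inj r"
  proof (rule injI)
    fix a b assume "r a = r b"
    then have "idx \<sigma> a = idx \<sigma> b" by (simp add: r_def)
    then show "a = b" using idx_props(2)[OF bij] by metis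
  qed
  moreover have "0 \<le> r i \<and> r i < 1" for i
    using idx_props(1)[OF bij, of i] by (simp add: r_def)
  ultimately show ?thesis by blast
qed

definition bkey :: "('n \<Rightarrow> nat) \<Rightarrow> ('n \<Rightarrow> real) \<Rightarrow> 'n \<Rightarrow> real" where
  "bkey b r i = real (b i) + r i"

lemma bkey_props:
  assumes "inj r" "\<And>i. 0 \<le> r i \<and> r i < 1"
  shows "inj (bkey b r)"
    and "bkey b r j > bkey b r i \<Longrightarrow> b j \<ge> b i"
    and "b j > b i \<Longrightarrow> bkey b r j > bkey b r i"
    and "upper (bkey b r) {i. b i \<ge> c}"
proof -
  show 2: "bkey b r j > bkey b r i \<Longrightarrow> b j \<ge> b i" for i j
  proof (rule ccontr)
    assume "bkey b r j > bkey b r i" "\<not> b i \<le> b j"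
    then have "real (b j) + 1 \<le> real (b i)" by simp
    then show False using \<open>bkey b r j > bkey b r i\<close> assms(2)[of i] assms(2)[of j]
      by (simp add: bkey_def)
  qed
  show "b j > b i \<Longrightarrow> bkey b r j > bkey b r i"
  proof -
    assume "b j > b i"
    then have "real (b i) + 1 \<le> real (b j)" by simp
    then show ?thesis using assms(2)[of i] assms(2)[of j] by (simp add: bkey_def)
  qed
  show "inj (bkey b r)"
  proof (rule injI)
    fix x y assume e: "bkey b r x = bkey b r y"
    have "b x = b y"
    proof (rule ccontr)
      assume "b x \<noteq> b y"
      then have "real (b x) + 1 \<le> real (b y) \<or> real (b y) + 1 \<le> real (b x)" by auto
      then show False using e assms(2)[of x] assms(2)[of y] by (auto simp: bkey_def)
    qed
    then have "r x = r y" using e by (simp add: bkey_def)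
    then show "x = y" using assms(1) by (simp add: inj_def)
  qed
  show "upper (bkey b r) {i. b i \<ge> c}"
    unfolding upper_def
  proof (intro ballI allI impI)
    fix i j assume "i \<in> {i. b i \<ge> c}" "bkey b r i < bkey b r j"
    then have "b j \<ge> b i" "b i \<ge> c" using 2 by auto
    then show "j \<in> {i. b i \<ge> c}" by simp
  qed
qed

lemma PF_zero:
  assumes "nondecreasing_setfun F" "F {} = 0"
  shows "PF F 0"
  unfolding PF_def
proof
  fix B :: "'a set"
  have "F {} \<le> F B" using assms(1) unfolding nondecreasing_setfun_def by blast
  then show "sum (\<lambda>i. (0::real^'a) $ i) B \<le> F B" using assms(2) by simp
qed

lemma PF_single:
  assumes "nondecreasing_setfun F" "F {} = 0"
  shows "PF F (\<chi> i. if i = k then F {k} else 0)"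
  unfolding PF_def
proof
  fix B
  have "sum (\<lambda>i. (\<chi> i. if i = k then F {k} else 0) $ i) B = (if k \<in> B then F {k} else 0)"
    by (simp add: sum.delta)
  also have "\<dots> \<le> F B"
  proof (cases "k \<in> B")
    case True
    then have "{k} \<subseteq> B" by simp
    then show ?thesis using True assms(1) unfolding nondecreasing_setfun_def by simp
  next
    case False
    have "F {} \<le> F B" using assms(1) unfolding nondecreasing_setfun_def by blast
    then show ?thesis using False assms(2) by simp
  qed
  finally show "sum (\<lambda>i. (\<chi> i. if i = k then F {k} else 0) $ i) B \<le> F B" .
qed

lemma subadd:
  fixes F :: "'n::finite set \<Rightarrow> real"
  assumes "submodular F" "nondecreasing_setfun F" "F {} = 0" "finite P"
  shows "F (\<Union>P) \<le> (\<Sum>B\<in>P. F B)"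
  using assms(4)
proof (induction P rule: finite_induct)
  case empty then show ?case using assms by simp
next
  case (insert B P)
  have "F (B \<union> \<Union>P) + F (B \<inter> \<Union>P) \<le> F B + F (\<Union>P)" using assms(1) unfolding submodular_def by blast
  moreover have "F (B \<inter> \<Union>P) \<ge> 0"
  proof -
    have "F {} \<le> F (B \<inter> \<Union>P)" using assms(2) unfolding nondecreasing_setfun_def by blast
    then show ?thesis using assms(3) by simp
  qed
  ultimately show ?case using insert by simp
qed



lemma two_sep:
  fixes F :: "'n::finite set \<Rightarrow> real"
  assumes "T \<noteq> {}" "A - T \<noteq> {}" "T \<subseteq> A" "F T + F (A - T) = F A"
  shows "separable_set F A"
proof -
  have ne: "T \<noteq> A - T" using assms(1,3) by blast
  have "partition_on A {T, A - T}"
    by (rule partition_onI) (use assms in \<open>auto simp: disjnt_def\<close>)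
  moreover have "card {T, A - T} = 2" using ne by simp
  moreover have "(\<Sum>B\<in>{T, A - T}. F B) = F A" using ne assms(4) by simp
  moreover have "A \<noteq> {}" using assms by blast
  ultimately show ?thesis unfolding separable_set_def by (metis order_refl)
qed

lemma Tlemma:
  fixes F :: "'n::finite set \<Rightarrow> real" and u r :: "'n \<Rightarrow> real"
  assumes sm: "submodular F" and mono: "nondecreasing_setfun F" and F0: "F {} = 0"
    and ins: "inseparable_set F A"
    and u0: "\<And>i. u i \<ge> 0" and uA: "\<And>i. i \<notin> A \<Longrightarrow> u i = 0"
    and cert: "\<And>s'. PF F s' \<Longrightarrow> sum (\<lambda>i. s'$i) A = F A \<Longrightarrow> (\<Sum>i\<in>UNIV. s'$i * u i) = 1"
    and r: "inj r" "\<And>i. 0 \<le> r i \<and> r i < 1"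
  shows "\<forall>i\<in>A. u i = 1 / F A"
proof -
  have Ane: "A \<noteq> {}" using ins by (simp add: inseparable_set_def)
  define c where "c = Max (u ` A)"
  define T where "T = {i\<in>A. u i = c}"
  have uc: "\<And>i. i \<in> A \<Longrightarrow> u i \<le> c" unfolding c_def by simp
  have "c \<in> u ` A" using Ane unfolding c_def by simp
  then have Tne: "T \<noteq> {}" unfolding T_def by force
  have TA: "T \<subseteq> A" unfolding T_def by auto
  have dotA: "(\<Sum>i\<in>UNIV. s'$i * u i) = (\<Sum>i\<in>A. s'$i * u i)" for s' :: "real^'n"
    by (rule sum_supp) (use uA in simp)
  have keyfacts: "PF F (gK F (bkey b r)) \<and> (\<forall>k. sum (\<lambda>i. gK F (bkey b r) $ i) {i. b i \<ge> k} = F {i. b i \<ge> k})" for b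
    using gK_PF[OF bkey_props(1)[OF r] sm F0] gK_upper[where F=F, OF bkey_props(1)[OF r] F0 bkey_props(4)[OF r]]
    by blast
  show ?thesis
  proof (cases "T = A")
    case True
    define b where "b = (\<lambda>i. if i \<in> A then 1 else 0::nat)"
    have Ab: "A = {i. b i \<ge> 1}" unfolding b_def by auto
    let ?s = "gK F (bkey b r)"
    have "sum (\<lambda>i. ?s $ i) A = F A" using keyfacts[of b] Ab by metis
    then have "(\<Sum>i\<in>UNIV. ?s$i * u i) = 1" using cert keyfacts by blast
    moreover have "(\<Sum>i\<in>A. ?s$i * u i) = (\<Sum>i\<in>A. ?s$i * c)"
      using True unfolding T_def by (intro sum.cong) auto
    moreover have "(\<Sum>i\<in>A. ?s$i * c) = c * F A"
      using \<open>sum (\<lambda>i. ?s $ i) A = F A\<close> by (simp add: sum_distrib_left[symmetric] mult.commute)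
    ultimately have "c * F A = 1" using dotA[of ?s] by simp
    then have "F A \<noteq> 0" by auto
    then have "c = 1 / F A" using \<open>c * F A = 1\<close> by (simp add: eq_divide_eq)
    then show ?thesis using True unfolding T_def by auto
  next
    case False
    define Ab where "Ab = A - T"
    have Abne: "Ab \<noteq> {}" using False TA unfolding Ab_def by blast
    define b1 where "b1 = (\<lambda>i. if i \<in> T then 2 else if i \<in> A then 1 else 0::nat)"
    define b2 where "b2 = (\<lambda>i. if i \<in> Ab then 2 else if i \<in> A then 1 else 0::nat)"
    let ?s1 = "gK F (bkey b1 r)" and ?s2 = "gK F (bkey b2 r)"
    have A1: "A = {i. b1 i \<ge> 1}" and T1: "T = {i. b1 i \<ge> 2}"
      unfolding b1_def using TA by auto
    have A2: "A = {i. b2 i \<ge> 1}" and T2: "Ab = {i. b2 i \<ge> 2}"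
      unfolding b2_def Ab_def by auto
    have s1A: "sum (\<lambda>i. ?s1 $ i) A = F A" and s1T: "sum (\<lambda>i. ?s1 $ i) T = F T"
      using keyfacts[of b1] A1 T1 by metis+
    have s2A: "sum (\<lambda>i. ?s2 $ i) A = F A" and s2T: "sum (\<lambda>i. ?s2 $ i) Ab = F Ab"
      using keyfacts[of b2] A2 T2 by metis+
    have e1: "(\<Sum>i\<in>A. ?s1$i * u i) = 1" using cert[of ?s1] keyfacts[of b1] s1A dotA by simp
    have e2: "(\<Sum>i\<in>A. ?s2$i * u i) = 1" using cert[of ?s2] keyfacts[of b2] s2A dotA by simp
    have split: "(\<Sum>i\<in>A. f i) = (\<Sum>i\<in>T. f i) + (\<Sum>i\<in>Ab. f i)" for f :: "'n \<Rightarrow> real"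
    proof -
      have "A = T \<union> Ab" "T \<inter> Ab = {}" using TA unfolding Ab_def by auto
      then show ?thesis by (simp add: sum.union_disjoint)
    qed
    have onT: "(\<Sum>i\<in>T. f i * u i) = c * (\<Sum>i\<in>T. f i)" for f :: "'n \<Rightarrow> real"
      unfolding T_def by (simp add: sum_distrib_left mult.commute)
    have le: "?s1 $ i \<le> ?s2 $ i" if i: "i \<in> Ab" for i
    proof -
      let ?Y = "{k. bkey b1 r k > bkey b1 r i}" and ?X = "{k. bkey b2 r k > bkey b2 r i}"
      have b2i: "b2 i = 2" and b1i: "b1 i = 1" using i unfolding b1_def b2_def Ab_def by auto
      have XY: "?X \<subseteq> ?Y"
      proof
        fix k assume "k \<in> ?X"
        then have k: "bkey b2 r k > bkey b2 r i" by simp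
        then have "b2 k \<ge> b2 i" using bkey_props(2)[OF r] by blast
        then have "k \<in> Ab" using b2i unfolding b2_def by (auto split: if_splits)
        then have "b2 k = 2" "b1 k = 1" unfolding b1_def b2_def Ab_def by auto
        then show "k \<in> ?Y" using k b1i b2i by (simp add: bkey_def)
      qed
      have "i \<notin> ?Y" by simp
      then have "F (insert i ?Y) - F ?Y \<le> F (insert i ?X) - F ?X" using dimret[OF sm XY] by blast
      then show ?thesis using gK_ge[OF bkey_props(1)[OF r], of b1 i] gK_ge[OF bkey_props(1)[OF r], of b2 i]
        by (simp add: gK_def)
    qed
    have sumAb1: "sum (\<lambda>i. ?s1 $ i) Ab = F A - F T" using split[of "\<lambda>i. ?s1 $ i"] s1A s1T by simp
    have sumAb2: "sum (\<lambda>i. ?s2 $ i) T = F A - F Ab" using split[of "\<lambda>i. ?s2 $ i"] s2A s2T by simp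
    have z: "(\<Sum>i\<in>Ab. (?s2$i - ?s1$i) * (c - u i)) = 0"
    proof -
      have "(\<Sum>i\<in>Ab. (?s2$i - ?s1$i) * (c - u i)) =
          c * (sum (\<lambda>i. ?s2 $ i) Ab - sum (\<lambda>i. ?s1 $ i) Ab) - ((\<Sum>i\<in>Ab. ?s2$i * u i) - (\<Sum>i\<in>Ab. ?s1$i * u i))"
      proof -
        have "(\<Sum>i\<in>Ab. (?s2$i - ?s1$i) * (c - u i)) = (\<Sum>i\<in>Ab. (c * ?s2$i - c * ?s1$i) - (?s2$i * u i - ?s1$i * u i))"
          by (intro sum.cong) (auto simp: algebra_simps)
        also have "\<dots> = c * (sum (\<lambda>i. ?s2 $ i) Ab - sum (\<lambda>i. ?s1 $ i) Ab) - ((\<Sum>i\<in>Ab. ?s2$i * u i) - (\<Sum>i\<in>Ab. ?s1$i * u i))"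
          by (simp only: sum_subtractf sum_distrib_left right_diff_distrib)
        finally show ?thesis .
      qed
      also have "\<dots> = 0"
      proof -
        have a1: "(\<Sum>i\<in>T. ?s1$i * u i) + (\<Sum>i\<in>Ab. ?s1$i * u i) = 1" using e1 split[of "\<lambda>i. ?s1$i * u i"] by simp
        have a2: "(\<Sum>i\<in>T. ?s2$i * u i) + (\<Sum>i\<in>Ab. ?s2$i * u i) = 1" using e2 split[of "\<lambda>i. ?s2$i * u i"] by simp
        have t1: "(\<Sum>i\<in>T. ?s1$i * u i) = c * F T" using onT[of "\<lambda>i. ?s1$i"] s1T by simp
        have t2: "(\<Sum>i\<in>T. ?s2$i * u i) = c * F A - c * F Ab" using onT[of "\<lambda>i. ?s2$i"] sumAb2 by (simp add: right_diff_distrib)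
        have d: "c * (sum (\<lambda>i. ?s2 $ i) Ab - sum (\<lambda>i. ?s1 $ i) Ab) = c * F Ab - c * F A + c * F T"
          unfolding s2T sumAb1 by (simp add: algebra_simps)
        show ?thesis using a1 a2 t1 t2 d by linarith
      qed
      finally show ?thesis .
    qed
    have nn: "\<forall>i\<in>Ab. (?s2$i - ?s1$i) * (c - u i) \<ge> 0"
      using le uc unfolding Ab_def by (auto intro!: mult_nonneg_nonneg)
    have eq: "\<forall>i\<in>Ab. ?s2$i = ?s1$i"
    proof
      fix i assume i: "i \<in> Ab"
      have "(?s2$i - ?s1$i) * (c - u i) = 0" using z nn sum_nonneg_eq_0_iff[of Ab "\<lambda>i. (?s2$i - ?s1$i) * (c - u i)"] i by simp
      moreover have "u i < c" using i uc unfolding Ab_def T_def by (simp add: less_le)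
      ultimately show "?s2$i = ?s1$i" by simp
    qed
    then have "sum (\<lambda>i. ?s2 $ i) Ab = sum (\<lambda>i. ?s1 $ i) Ab" by (intro sum.cong) auto
    then have "F T + F (A - T) = F A" using s2T sumAb1 unfolding Ab_def by simp
    then have "separable_set F A" using two_sep Tne Abne TA unfolding Ab_def by blast
    then show ?thesis using ins by (simp add: inseparable_set_def)
  qed
qed



lemma vabs_nth[simp]: "vabs w $ i = \<bar>w $ i\<bar>"
  by (simp add: vabs_def)

lemma LBv:
  fixes F :: "'n::finite set \<Rightarrow> real" and y s :: "real^'n"
  assumes "PF F s" "F {} = 0"
  shows "(\<Sum>i\<in>UNIV. s$i * \<bar>y$i\<bar>) \<le> lovasz_ext F (vabs y)"
  using lov_LB[of "vabs y" F s] assms by simp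

lemma form_extreme:
  fixes F :: "'n::finite set \<Rightarrow> real" and x s :: "real^'n"
  assumes sm: "submodular F" and mono: "nondecreasing_setfun F" and F0: "F {} = 0"
    and pos: "\<And>k. F {k} > 0"
    and sv: "\<forall>i. s $ i \<in> {-1, 0, 1}" and As: "supp s = A" and st: "stable_set F A"
    and ins: "inseparable_set F A" and x: "x = (1 / F A) *\<^sub>R s"
  shows "x extreme_point_of {w. lovasz_ext F (vabs w) \<le> 1}"
proof -
  have Ane: "A \<noteq> {}" using ins by (simp add: inseparable_set_def)
  then obtain k0 where "k0 \<in> A" by blast
  then have "F {k0} \<le> F A" using mono unfolding nondecreasing_setfun_def by simp
  then have FA: "F A > 0" using pos[of k0] by linarith
  define a where "a = 1 / F A"
  have a: "a > 0" "a * F A = 1" using FA by (simp_all add: a_def)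
  have absx: "\<bar>x$i\<bar> = (if i \<in> A then a else 0)" for i
  proof -
    have "i \<in> A \<longleftrightarrow> s$i \<noteq> 0" using As by (auto simp: supp_def)
    moreover have "s$i = -1 \<or> s$i = 0 \<or> s$i = 1" using sv by auto
    ultimately show ?thesis using x a by (auto simp: a_def)
  qed
  have vx: "vabs x = (\<chi> i. if i \<in> A then a else 0)" by (simp add: vec_eq_iff absx)
  have xK: "lovasz_ext F (vabs x) = 1" unfolding vx using LI[OF less_imp_le[OF a(1)] sm F0] a by simp
  obtain r :: "'n \<Rightarrow> real" where r: "inj r" "\<And>i. 0 \<le> r i \<and> r i < 1" using r_exists by blast
  have keyfacts: "PF F (gK F (bkey b r)) \<and> (\<forall>k. sum (\<lambda>i. gK F (bkey b r) $ i) {i. b i \<ge> k} = F {i. b i \<ge> k})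
      \<and> (\<forall>i. gK F (bkey b r) $ i \<ge> 0)" for b
    using gK_PF[OF bkey_props(1)[OF r] sm F0] gK_upper[where F=F, OF bkey_props(1)[OF r] F0 bkey_props(4)[OF r]]
      gK_nonneg[OF mono] by blast
  have sumx: "(\<Sum>i\<in>UNIV. s'$i * \<bar>x$i\<bar>) = a * sum (\<lambda>i. s'$i) A" for s' :: "real^'n"
    using sum_ind[of "\<lambda>i. s'$i" A a] absx by simp
  show ?thesis
    unfolding extreme_point_of_def
  proof (intro conjI ballI)
    show "x \<in> {w. lovasz_ext F (vabs w) \<le> 1}" using xK by simp
    fix y z assume yK: "y \<in> {w. lovasz_ext F (vabs w) \<le> 1}" and zK: "z \<in> {w. lovasz_ext F (vabs w) \<le> 1}"
    show "x \<notin> open_segment y z"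
    proof
      assume "x \<in> open_segment y z"
      then obtain t where yz: "y \<noteq> z" and t: "0 < t" "t < 1" and xt: "x = (1 - t) *\<^sub>R y + t *\<^sub>R z"
        unfolding in_segment by blast
      have xi: "x$i = (1-t) * y$i + t * z$i" for i using xt by simp
      define m where "m i = (1-t) * \<bar>y$i\<bar> + t * \<bar>z$i\<bar>" for i
      have mge: "m i \<ge> \<bar>x$i\<bar>" for i
      proof -
        have "\<bar>x$i\<bar> \<le> \<bar>(1-t) * y$i\<bar> + \<bar>t * z$i\<bar>" unfolding xi by (rule abs_triangle_ineq)
        then show ?thesis using t by (simp add: m_def abs_mult)
      qed
      have Oy: "lovasz_ext F (vabs y) \<le> 1" and Oz: "lovasz_ext F (vabs z) \<le> 1" using yK zK by auto
      have summ: "(\<Sum>i\<in>UNIV. s'$i * m i) = (1-t) * (\<Sum>i\<in>UNIV. s'$i * \<bar>y$i\<bar>) + t * (\<Sum>i\<in>UNIV. s'$i * \<bar>z$i\<bar>)"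
        for s' :: "real^'n"
      proof -
        have "(\<Sum>i\<in>UNIV. s'$i * m i) = (\<Sum>i\<in>UNIV. (1-t) * (s'$i * \<bar>y$i\<bar>) + t * (s'$i * \<bar>z$i\<bar>))"
          by (intro sum.cong) (auto simp: m_def algebra_simps)
        then show ?thesis by (simp add: sum.distrib sum_distrib_left)
      qed
      have cert: "m i = \<bar>x$i\<bar>" if ps: "PF F s'" and s0: "\<forall>i. s'$i \<ge> 0" and sA: "sum (\<lambda>i. s'$i) A = F A"
        and spos: "s'$i > 0" for s' i
      proof -
        have al: "(\<Sum>i\<in>UNIV. s'$i * \<bar>y$i\<bar>) \<le> 1" using LBv[OF ps F0, of y] Oy by linarith
        have "(\<Sum>i\<in>UNIV. s'$i * \<bar>z$i\<bar>) \<le> 1" using LBv[OF ps F0, of z] Oz by linarith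
        have "(1-t) * (\<Sum>i\<in>UNIV. s'$i * \<bar>y$i\<bar>) \<le> 1 - t" using mult_left_mono[OF al, of "1-t"] t by simp
        moreover have "t * (\<Sum>i\<in>UNIV. s'$i * \<bar>z$i\<bar>) \<le> t"
          using mult_left_mono[OF \<open>(\<Sum>i\<in>UNIV. s'$i * \<bar>z$i\<bar>) \<le> 1\<close>, of t] t by simp
        ultimately have "(\<Sum>i\<in>UNIV. s'$i * m i) \<le> 1" unfolding summ by linarith
        moreover have "(\<Sum>i\<in>UNIV. s'$i * \<bar>x$i\<bar>) = 1" using sumx sA a by simp
        ultimately have le0: "(\<Sum>i\<in>UNIV. s'$i * (m i - \<bar>x$i\<bar>)) \<le> 0"
          by (simp add: right_diff_distrib sum_subtractf)
        have nn: "\<forall>j\<in>UNIV. s'$j * (m j - \<bar>x$j\<bar>) \<ge> 0" using s0 mge by simp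
        then have "(\<Sum>i\<in>UNIV. s'$i * (m i - \<bar>x$i\<bar>)) = 0" proof -
          have "0 \<le> (\<Sum>i\<in>UNIV. s'$i * (m i - \<bar>x$i\<bar>))" using nn by (intro sum_nonneg) auto
          then show ?thesis using le0 by linarith
        qed
        then have "s'$i * (m i - \<bar>x$i\<bar>) = 0"
          using sum_nonneg_eq_0_iff[of UNIV "\<lambda>i. s'$i * (m i - \<bar>x$i\<bar>)"] nn by simp
        then show ?thesis using spos by simp
      qed
      have step1: "m j = \<bar>x$j\<bar>" if j: "j \<notin> A" for j
      proof -
        define b where "b = (\<lambda>i. if i \<in> A then 2 else if i = j then 1 else 0::nat)"
        let ?s = "gK F (bkey b r)"
        have Ab: "A = {i. b i \<ge> 2}" unfolding b_def using j by auto
        have gt: "{k. bkey b r k > bkey b r j} = A"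
        proof
          show "{k. bkey b r k > bkey b r j} \<subseteq> A"
          proof
            fix k assume "k \<in> {k. bkey b r k > bkey b r j}"
            then have "b k \<ge> b j" "k \<noteq> j" using bkey_props(2)[OF r] by auto
            then show "k \<in> A" unfolding b_def by (auto split: if_splits)
          qed
          show "A \<subseteq> {k. bkey b r k > bkey b r j}"
            using bkey_props(3)[OF r] j unfolding b_def by force
        qed
        have "?s $ j = F (insert j A) - F A"
          using gK_ge[OF bkey_props(1)[OF r], of b j] gt by (simp add: gK_def)
        moreover have "F (insert j A) > F A" using st j unfolding stable_set_def by blast
        ultimately have "?s $ j > 0" by simp
        moreover have "sum (\<lambda>i. ?s$i) A = F A" using keyfacts[of b] Ab by simp
        ultimately show ?thesis using cert[of ?s j] keyfacts[of b] by blast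
      qed
      have step2: "m i = \<bar>x$i\<bar>" if i: "i \<in> A" for i
      proof -
        define b where "b = (\<lambda>k. if k = i then 2 else if k \<in> A then 1 else 0::nat)"
        let ?s = "gK F (bkey b r)"
        have Ab: "A = {k. b k \<ge> 1}" unfolding b_def using i by auto
        have gt: "{k. bkey b r k > bkey b r i} = {}"
        proof -
          have "\<not> bkey b r k > bkey b r i" for k
          proof
            assume h: "bkey b r k > bkey b r i"
            then have "b k \<ge> b i" using bkey_props(2)[OF r] by blast
            then have "k = i" unfolding b_def by (auto split: if_splits)
            then show False using h by simp
          qed
          then show ?thesis by blast
        qed
        have "?s $ i = F {i} - F {}"
          using gK_ge[OF bkey_props(1)[OF r], of b i] gt by (simp add: gK_def)
        then have "?s $ i > 0" using pos[of i] F0 by simp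
        moreover have "sum (\<lambda>k. ?s$k) A = F A" using keyfacts[of b] Ab by simp
        ultimately show ?thesis using cert[of ?s i] keyfacts[of b] by blast
      qed
      have mx: "m i = \<bar>x$i\<bar>" for i using step1 step2 by blast
      have yz0: "y$i = 0 \<and> z$i = 0" if "i \<notin> A" for i
      proof -
        have "(1-t) * \<bar>y$i\<bar> + t * \<bar>z$i\<bar> = 0" using mx[of i] absx[of i] that by (simp add: m_def)
        moreover have "(1-t) * \<bar>y$i\<bar> \<ge> 0" "t * \<bar>z$i\<bar> \<ge> 0" using t by simp_all
        ultimately show ?thesis using t by (simp add: add_nonneg_eq_0_iff)
      qed
      have step3: "(\<Sum>i\<in>UNIV. s'$i * \<bar>y$i\<bar>) = 1 \<and> (\<Sum>i\<in>UNIV. s'$i * \<bar>z$i\<bar>) = 1"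
        if ps: "PF F s'" and sA: "sum (\<lambda>i. s'$i) A = F A" for s'
      proof -
        have al: "(\<Sum>i\<in>UNIV. s'$i * \<bar>y$i\<bar>) \<le> 1" using LBv[OF ps F0, of y] Oy by linarith
        have be: "(\<Sum>i\<in>UNIV. s'$i * \<bar>z$i\<bar>) \<le> 1" using LBv[OF ps F0, of z] Oz by linarith
        have "(\<Sum>i\<in>UNIV. s'$i * m i) = 1" using mx sumx sA a by simp
        then have "(1-t) * (\<Sum>i\<in>UNIV. s'$i * \<bar>y$i\<bar>) + t * (\<Sum>i\<in>UNIV. s'$i * \<bar>z$i\<bar>) = 1"
          using summ by simp
        moreover have h1: "(1-t) * (\<Sum>i\<in>UNIV. s'$i * \<bar>y$i\<bar>) \<le> 1 - t" using mult_left_mono[OF al, of "1-t"] t by simp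
        moreover have h2: "t * (\<Sum>i\<in>UNIV. s'$i * \<bar>z$i\<bar>) \<le> t" using mult_left_mono[OF be, of t] t by simp
        ultimately have "(1-t) * (\<Sum>i\<in>UNIV. s'$i * \<bar>y$i\<bar>) = 1 - t" "t * (\<Sum>i\<in>UNIV. s'$i * \<bar>z$i\<bar>) = t"
          by linarith+
        then have "(1-t) * (\<Sum>i\<in>UNIV. s'$i * \<bar>y$i\<bar>) = (1-t) * 1" "t * (\<Sum>i\<in>UNIV. s'$i * \<bar>z$i\<bar>) = t * 1"
          by simp_all
        then show ?thesis using t by (simp only: mult_cancel_left) simp
      qed
      have uy: "\<forall>i\<in>A. \<bar>y$i\<bar> = 1 / F A"
        by (rule Tlemma[where u="\<lambda>i. \<bar>y$i\<bar>", OF sm mono F0 ins _ _ _ r]) (use yz0 step3 in auto)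
      have uz: "\<forall>i\<in>A. \<bar>z$i\<bar> = 1 / F A"
        by (rule Tlemma[where u="\<lambda>i. \<bar>z$i\<bar>", OF sm mono F0 ins _ _ _ r]) (use yz0 step3 in auto)
      have "y$i = z$i" for i
      proof (cases "i \<in> A")
        case False then show ?thesis using yz0 by simp
      next
        case True
        have ay: "\<bar>y$i\<bar> = a" "\<bar>z$i\<bar> = a" using uy uz True by (auto simp: a_def)
        have "\<bar>(1-t) * y$i + t * z$i\<bar> = a" using mx[of i] absx[of i] True xi[of i] by simp
        moreover have "y$i = a \<or> y$i = -a" "z$i = a \<or> z$i = -a" using ay by auto
        ultimately show ?thesis
        proof (elim disjE)
          assume "y$i = a" "z$i = -a" "\<bar>(1-t) * y$i + t * z$i\<bar> = a"
          then have "\<bar>(1 - 2*t) * a\<bar> = a" by (simp add: algebra_simps)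
          then have "\<bar>1 - 2*t\<bar> = 1" using a(1) by (simp add: abs_mult)
          then show ?thesis using t by linarith
        next
          assume "y$i = -a" "z$i = a" "\<bar>(1-t) * y$i + t * z$i\<bar> = a"
          then have "\<bar>(2*t - 1) * a\<bar> = a" by (simp add: algebra_simps)
          then have "\<bar>2*t - 1\<bar> = 1" using a(1) by (simp add: abs_mult)
          then show ?thesis using t by linarith
        qed simp_all
      qed
      then show False using yz by (simp add: vec_eq_iff)
    qed
  qed
qed



lemma Fpos:
  fixes F :: "'n::finite set \<Rightarrow> real"
  assumes "nondecreasing_setfun F" "\<And>k. F {k} > 0" "B \<noteq> {}"
  shows "F B > 0"
proof -
  obtain k where "k \<in> B" using assms(3) by blast
  then have "F {k} \<le> F B" using assms(1) unfolding nondecreasing_setfun_def by simp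
  then show ?thesis using assms(2)[of k] by linarith
qed

lemma not_extreme:
  assumes "y \<in> S" "z \<in> S" "y \<noteq> z" "0 < t" "t < 1" "x = (1 - t) *\<^sub>R y + t *\<^sub>R z"
  shows "\<not> x extreme_point_of S"
  using assms unfolding extreme_point_of_def in_segment by blast

lemma vabs_scale: "c \<ge> 0 \<Longrightarrow> vabs (c *\<^sub>R x) = c *\<^sub>R vabs x"
  by (simp add: vec_eq_iff abs_mult)

lemma extreme_form:
  fixes F :: "'n::finite set \<Rightarrow> real" and x :: "real^'n"
  assumes sm: "submodular F" and mono: "nondecreasing_setfun F" and F0: "F {} = 0"
    and pos: "\<And>k. F {k} > 0"
    and ext: "x extreme_point_of {w. lovasz_ext F (vabs w) \<le> 1}"
  shows "\<exists>s A. (\<forall>i. s $ i \<in> {-1, 0, 1}) \<and> supp s = A \<and>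
       stable_set F A \<and> inseparable_set F A \<and> x = (1 / F A) *\<^sub>R s"
proof -
  let ?K = "{w. lovasz_ext F (vabs w) \<le> 1}"
  define \<omega> where "\<omega> = lovasz_ext F (vabs x)"
  have xK: "\<omega> \<le> 1" using ext unfolding extreme_point_of_def \<omega>_def by simp
  have om0: "\<omega> \<ge> 0" using LBv[OF PF_zero[OF mono F0] F0, of x] unfolding \<omega>_def by simp
  have absnn: "\<And>i. vabs w $ i \<ge> 0" for w :: "real^'n" by simp
  have LIv: "lovasz_ext F (\<chi> i. if i \<in> S then c else 0) = c * F S" if "c \<ge> 0" for c S
    using LI[OF that sm F0] .
  have xne: "x \<noteq> 0"
  proof
    assume x0: "x = 0"
    define k :: 'n where "k = undefined"
    define y :: "real^'n" where "y = (\<chi> i. if i = k then 1 / F {k} else 0)"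
    have vy: "vabs y = (\<chi> i. if i \<in> {k} then 1 / F {k} else 0)" "vabs (-y) = vabs y"
      using pos[of k] by (simp_all add: vec_eq_iff y_def abs_of_pos)
    have "lovasz_ext F (vabs y) = 1" unfolding vy using LIv[of "1 / F {k}" "{k}"] pos[of k] by simp
    then have "y \<in> ?K" "-y \<in> ?K" using vy by auto
    moreover have "y \<noteq> -y" using pos[of k] by (auto simp: vec_eq_iff y_def intro!: exI[of _ k])
    moreover have "x = (1 - 1/2) *\<^sub>R y + (1/2) *\<^sub>R (-y)" using x0 by simp
    ultimately show False using not_extreme[of y ?K "-y" "1/2" x] ext by simp
  qed
  have om1: "\<omega> = 1"
  proof (rule ccontr)
    assume "\<omega> \<noteq> 1"
    then have lt: "\<omega> < 1" using xK by simp
    have "lovasz_ext F (vabs (\<omega> *\<^sub>R x)) = \<omega> * \<omega>"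
      using vabs_scale[OF om0, of x] lov_scale[where w="vabs x", OF om0 absnn sm F0] unfolding \<omega>_def by simp
    moreover have "lovasz_ext F (vabs ((2 - \<omega>) *\<^sub>R x)) = (2 - \<omega>) * \<omega>"
      using vabs_scale[of "2 - \<omega>" x] lov_scale[where c="2 - \<omega>" and w="vabs x", OF _ absnn sm F0] lt unfolding \<omega>_def by simp
    moreover have "\<omega> * \<omega> \<le> 1" using om0 lt by (simp add: mult_le_one)
    moreover have "(2 - \<omega>) * \<omega> \<le> 1"
    proof -
      have "(2 - \<omega>) * \<omega> = 1 - (1 - \<omega>) * (1 - \<omega>)" by (simp add: algebra_simps)
      moreover have "(1 - \<omega>) * (1 - \<omega>) \<ge> 0" by simp
      ultimately show ?thesis by linarith
    qed
    ultimately have "\<omega> *\<^sub>R x \<in> ?K" "(2 - \<omega>) *\<^sub>R x \<in> ?K" by auto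
    moreover have "\<omega> *\<^sub>R x \<noteq> (2 - \<omega>) *\<^sub>R x" using lt xne by (simp add: scaleR_cancel_right)
    moreover have "x = (1 - 1/2) *\<^sub>R (\<omega> *\<^sub>R x) + (1/2) *\<^sub>R ((2 - \<omega>) *\<^sub>R x)"
      by (simp add: scaleR_add_left[symmetric] algebra_simps)
    ultimately show False using not_extreme[of "\<omega> *\<^sub>R x" ?K "(2 - \<omega>) *\<^sub>R x" "1/2" x] ext by simp
  qed
  define A where "A = supp x"
  have Ai: "i \<in> A \<longleftrightarrow> x$i \<noteq> 0" for i by (simp add: A_def supp_def)
  have Ane: "A \<noteq> {}" using xne Ai by (auto simp: vec_eq_iff)
  have const: "\<bar>x$i\<bar> = \<bar>x$j\<bar>" if ij: "i \<in> A" "j \<in> A" for i j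
  proof (rule ccontr)
    assume "\<bar>x$i\<bar> \<noteq> \<bar>x$j\<bar>"
    then obtain i0 i1 where i01: "i0 \<in> A" "i1 \<in> A" "\<bar>x$i0\<bar> < \<bar>x$i1\<bar>"
    proof (cases "\<bar>x$i\<bar> < \<bar>x$j\<bar>")
      case True then show ?thesis using ij by (intro that[of i j]) auto
    next
      case False
      then have "\<bar>x$j\<bar> < \<bar>x$i\<bar>" using \<open>\<bar>x$i\<bar> \<noteq> \<bar>x$j\<bar>\<close> by linarith
      then show ?thesis using ij by (intro that[of j i]) auto
    qed
    define d where "d = \<bar>x$i0\<bar>"
    have d0: "d > 0" using i01 Ai by (simp add: d_def)
    define w where "w = vabs x"
    obtain \<sigma> where so: "sorting_order w \<sigma>" using sort_exists by blast
    define p1 :: "real^'n" where "p1 = (\<chi> i. max (w$i - d) 0)"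
    define p2 :: "real^'n" where "p2 = (\<chi> i. min (w$i) d)"
    have wle: "w $ (\<sigma> j) \<le> w $ (\<sigma> i)" if "i \<le> j" "j < CARD('n)" for i j
      using so that unfolding sorting_order_def by blast
    have bs: "bij_betw \<sigma> {..<CARD('n)} UNIV" using so unfolding sorting_order_def by blast
    have so1: "sorting_order p1 \<sigma>" unfolding sorting_order_def
    proof (intro conjI allI impI bs)
      fix i j :: nat assume "i \<le> j" "j < CARD('n)"
      then show "p1 $ (\<sigma> j) \<le> p1 $ (\<sigma> i)" using wle[of i j] by (simp add: p1_def)
    qed
    have so2: "sorting_order p2 \<sigma>" unfolding sorting_order_def
    proof (intro conjI allI impI bs)
      fix i j :: nat assume "i \<le> j" "j < CARD('n)"
      then show "p2 $ (\<sigma> j) \<le> p2 $ (\<sigma> i)" using wle[of i j] by (simp add: p2_def)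
    qed
    have p1nn: "\<And>i. p1$i \<ge> 0" and p2nn: "\<And>i. p2$i \<ge> 0" using d0 by (auto simp: p1_def p2_def w_def)
    have wsum: "p1 + p2 = w" by (auto simp: vec_eq_iff p1_def p2_def)
    define l1 where "l1 = lovasz_ext F p1"
    define l2 where "l2 = lovasz_ext F p2"
    have lsum: "l1 + l2 = 1" using lov_add[OF so1 so2 p1nn p2nn sm F0] wsum om1
      unfolding l1_def l2_def \<omega>_def w_def by simp
    have l1pos: "l1 > 0"
    proof -
      have "(\<Sum>i\<in>UNIV. (\<chi> i. if i = i1 then F {i1} else 0) $ i * p1$i) \<le> l1"
        using lov_LB[OF p1nn PF_single[OF mono F0] F0] unfolding l1_def by blast
      moreover have "(\<Sum>i\<in>UNIV. (\<chi> i. if i = i1 then F {i1} else 0) $ i * p1$i) = F {i1} * p1$i1"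
      proof -
        have "(\<Sum>i\<in>UNIV. (\<chi> i. if i = i1 then F {i1} else 0) $ i * p1$i) = (\<Sum>i\<in>UNIV. if i = i1 then F {i1} * p1$i else 0)"
          by (intro sum.cong) auto
        then show ?thesis by simp
      qed
      moreover have "p1$i1 > 0" using i01 by (simp add: p1_def w_def d_def)
      moreover have "F {i1} * p1$i1 > 0" using pos[of i1] \<open>p1$i1 > 0\<close> by simp
      ultimately show ?thesis by linarith
    qed
    have l2pos: "l2 > 0"
    proof -
      have "(\<Sum>i\<in>UNIV. (\<chi> i. if i = i0 then F {i0} else 0) $ i * p2$i) \<le> l2"
        using lov_LB[OF p2nn PF_single[OF mono F0] F0] unfolding l2_def by blast
      moreover have "(\<Sum>i\<in>UNIV. (\<chi> i. if i = i0 then F {i0} else 0) $ i * p2$i) = F {i0} * p2$i0"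
      proof -
        have "(\<Sum>i\<in>UNIV. (\<chi> i. if i = i0 then F {i0} else 0) $ i * p2$i) = (\<Sum>i\<in>UNIV. if i = i0 then F {i0} * p2$i else 0)"
          by (intro sum.cong) auto
        then show ?thesis by simp
      qed
      moreover have "p2$i0 > 0" using d0 by (simp add: p2_def w_def d_def)
      moreover have "F {i0} * p2$i0 > 0" using pos[of i0] \<open>p2$i0 > 0\<close> by simp
      ultimately show ?thesis by linarith
    qed
    define y1 :: "real^'n" where "y1 = (\<chi> i. sgn (x$i) * p1$i / l1)"
    define y2 :: "real^'n" where "y2 = (\<chi> i. sgn (x$i) * p2$i / l2)"
    have sp1: "\<bar>sgn (x$i)\<bar> * p1$i = p1$i" for i
      by (cases "x$i = 0") (auto simp: p1_def w_def d0 abs_sgn_eq)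
    have sp2: "\<bar>sgn (x$i)\<bar> * p2$i = p2$i" for i
      by (cases "x$i = 0") (auto simp: p2_def w_def d0 abs_sgn_eq)
    have vy1: "vabs y1 = (1 / l1) *\<^sub>R p1"
      using sp1 l1pos p1nn by (simp add: vec_eq_iff y1_def abs_mult)
    have vy2: "vabs y2 = (1 / l2) *\<^sub>R p2"
      using sp2 l2pos p2nn by (simp add: vec_eq_iff y2_def abs_mult)
    have "lovasz_ext F (vabs y1) = 1"
      unfolding vy1 using lov_scale[of "1/l1" p1, OF _ p1nn sm F0] l1pos unfolding l1_def by simp
    moreover have "lovasz_ext F (vabs y2) = 1"
      unfolding vy2 using lov_scale[of "1/l2" p2, OF _ p2nn sm F0] l2pos unfolding l2_def by simp
    ultimately have inK: "y1 \<in> ?K" "y2 \<in> ?K" by auto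
    have "y1$i0 = 0" by (simp add: y1_def p1_def w_def d_def)
    moreover have "y2$i0 \<noteq> 0" using i01 Ai d0 l2pos by (simp add: y2_def p2_def w_def d_def sgn_if)
    ultimately have ne: "y1 \<noteq> y2" by auto
    have "x = (1 - l2) *\<^sub>R y1 + l2 *\<^sub>R y2"
    proof -
      have "x$i = ((1 - l2) *\<^sub>R y1 + l2 *\<^sub>R y2)$i" for i
      proof -
        have "(1 - l2) = l1" using lsum by simp
        then have "((1 - l2) *\<^sub>R y1 + l2 *\<^sub>R y2)$i = l1 * (sgn (x$i) * p1$i / l1) + l2 * (sgn (x$i) * p2$i / l2)"
          by (simp add: y1_def y2_def)
        also have "\<dots> = sgn (x$i) * (p1$i + p2$i)"
          using l1pos l2pos by (simp add: field_simps)
        also have "\<dots> = sgn (x$i) * \<bar>x$i\<bar>" using wsum by (auto simp: vec_eq_iff w_def)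
        finally show ?thesis by (simp add: sgn_mult_abs)
      qed
      then show ?thesis by (simp add: vec_eq_iff)
    qed
    then show False using not_extreme[OF inK ne l2pos _] ext lsum l1pos by force
  qed
  obtain k0 where k0: "k0 \<in> A" using Ane by blast
  define c where "c = \<bar>x$k0\<bar>"
  have c0: "c > 0" using k0 Ai by (simp add: c_def)
  have vx: "vabs x = (\<chi> i. if i \<in> A then c else 0)"
    using const[OF _ k0] Ai by (auto simp: vec_eq_iff c_def)
  have FA: "F A > 0" using Fpos[OF mono pos Ane] .
  have "c * F A = 1" using LIv[of c A] c0 om1 vx unfolding \<omega>_def by simp
  then have cFA: "c = 1 / F A" using FA by (simp add: eq_divide_eq)
  define s :: "real^'n" where "s = (\<chi> i. sgn (x$i))"
  have sv: "\<forall>i. s $ i \<in> {-1, 0, 1}" by (simp add: s_def sgn_if)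
  have sA: "supp s = A" by (auto simp: s_def supp_def A_def sgn_if)
  have xcomp: "x$i = (1 / F A) * sgn (x$i)" for i
    proof (cases "i \<in> A")
      case True
      have "vabs x $ i = c" using vx True by simp
      then have "\<bar>x$i\<bar> = c" by simp
      moreover have "x$i = sgn (x$i) * \<bar>x$i\<bar>" by (simp add: sgn_mult_abs)
      ultimately show ?thesis using cFA by (simp add: mult.commute)
    next
      case False then show ?thesis using Ai by simp
    qed
  have xs: "x = (1 / F A) *\<^sub>R s"
    unfolding vec_eq_iff
  proof
    fix i
    have "((1 / F A) *\<^sub>R s)$i = (1/F A) * sgn (x$i)" by (simp add: s_def)
    then show "x$i = ((1 / F A) *\<^sub>R s)$i" using xcomp[of i] by linarith
  qed
  have absA: "\<bar>x$i\<bar> = (if i \<in> A then c else 0)" for i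
  proof -
    have "vabs x $ i = (if i \<in> A then c else 0)" using vx by simp
    then show ?thesis by simp
  qed
  have st: "stable_set F A"
    unfolding stable_set_def
  proof (intro allI impI)
    fix B assume AB: "A \<subset> B"
    show "F B > F A"
    proof (rule ccontr)
      assume "\<not> F B > F A"
      then have FB: "F B \<le> F A" by simp
      obtain j where j: "j \<in> B" "j \<notin> A" using AB by blast
      have "insert j A \<subseteq> B" "A \<subseteq> insert j A" using AB j by auto
      then have "F (insert j A) \<le> F B" "F A \<le> F (insert j A)" using mono unfolding nondecreasing_setfun_def
        by blast+
      then have Fj: "F (insert j A) = F A" using FB by simp
      define e :: "real^'n" where "e = (\<chi> i. if i = j then c else 0)"
      have xj: "x$j = 0" using j Ai by simp
      have v: "vabs (x + e) = (\<chi> i. if i \<in> insert j A then c else 0)"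
              "vabs (x - e) = (\<chi> i. if i \<in> insert j A then c else 0)"
        using absA xj c0 by (auto simp: vec_eq_iff e_def)
      have "lovasz_ext F (\<chi> i. if i \<in> insert j A then c else 0) = 1"
        using LIv[of c "insert j A"] c0 Fj \<open>c * F A = 1\<close> by simp
      then have inK: "x + e \<in> ?K" "x - e \<in> ?K" using v by auto
      have ne: "x + e \<noteq> x - e" using c0 by (auto simp: vec_eq_iff e_def intro!: exI[of _ j])
      have "x = (1 - 1/2) *\<^sub>R (x + e) + (1/2) *\<^sub>R (x - e)" by (simp add: vec_eq_iff field_simps)
      then show False using not_extreme[OF inK ne, of "1/2" x] ext by simp
    qed
  qed
  have ins: "inseparable_set F A"
    unfolding inseparable_set_def
  proof (rule conjI)
    show "A \<noteq> {}" by (rule Ane)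
    show "\<not> separable_set F A"
    proof
    assume "separable_set F A"
    then obtain P where P: "partition_on A P" "card P \<ge> 2" "F A = (\<Sum>B\<in>P. F B)"
      unfolding separable_set_def by blast
    have finP: "finite P" using P(2) card.infinite by fastforce
    obtain B0 where B0: "B0 \<in> P" using P(2) by fastforce
    have "card (P - {B0}) \<ge> 1" using P(2) B0 finP by simp
    then have "P - {B0} \<noteq> {}" by (cases "P - {B0} = {}") auto
    then obtain B1 where B1: "B1 \<in> P" "B1 \<noteq> B0" by blast
    have UP: "\<Union>P = A" "disjoint P" "{} \<notin> P" using P(1) unfolding partition_on_def by auto
    have B0A: "B0 \<subseteq> A" "B0 \<noteq> {}" using UP B0 by auto
    define C where "C = A - B0"
    have B1C: "B1 \<subseteq> C" "B1 \<noteq> {}" using UP B0 B1 unfolding C_def disjoint_def by auto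
    have Cne: "C \<noteq> {}" using B1C by auto
    have UC: "\<Union>(P - {B0}) = C"
    proof
      show "\<Union>(P - {B0}) \<subseteq> C" using UP B0 unfolding C_def disjoint_def by blast
      show "C \<subseteq> \<Union>(P - {B0})" using UP unfolding C_def by blast
    qed
    have "F A = F B0 + (\<Sum>B\<in>P - {B0}. F B)" using P(3) B0 finP by (simp add: sum.remove)
    moreover have "F C \<le> (\<Sum>B\<in>P - {B0}. F B)" using subadd[OF sm mono F0, of "P - {B0}"] finP UC by simp
    moreover have "F A \<le> F B0 + F C"
    proof -
      have "F (B0 \<union> C) + F (B0 \<inter> C) \<le> F B0 + F C" using sm unfolding submodular_def by blast
      moreover have "B0 \<union> C = A" "B0 \<inter> C = {}" using B0A unfolding C_def by auto
      ultimately show ?thesis using F0 by simp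
    qed
    ultimately have FAeq: "F A = F B0 + F C" by linarith
    have FB0: "F B0 > 0" and FC: "F C > 0" using Fpos[OF mono pos] B0A Cne by auto
    define y :: "real^'n" where "y = (\<chi> i. if i \<in> B0 then sgn (x$i) / F B0 else 0)"
    define z :: "real^'n" where "z = (\<chi> i. if i \<in> C then sgn (x$i) / F C else 0)"
    have sg: "i \<in> A \<Longrightarrow> \<bar>sgn (x$i)\<bar> = 1" for i using Ai by (simp add: abs_sgn_eq)
    have vy: "vabs y = (\<chi> i. if i \<in> B0 then 1 / F B0 else 0)"
      using sg B0A FB0 by (auto simp: vec_eq_iff y_def abs_div)
    have vz: "vabs z = (\<chi> i. if i \<in> C then 1 / F C else 0)"
      using sg FC by (auto simp: vec_eq_iff z_def abs_div C_def)
    have "lovasz_ext F (vabs y) = 1" unfolding vy using LIv[of "1 / F B0" B0] FB0 by simp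
    moreover have "lovasz_ext F (vabs z) = 1" unfolding vz using LIv[of "1 / F C" C] FC by simp
    ultimately have inK: "y \<in> ?K" "z \<in> ?K" by auto
    obtain i where i: "i \<in> B0" using B0A by blast
    have "y$i \<noteq> 0" using i B0A Ai FB0 by (auto simp: y_def sgn_if)
    moreover have "z$i = 0" using i by (simp add: z_def C_def)
    ultimately have ne: "y \<noteq> z" by auto
    define t where "t = F C / F A"
    have t: "0 < t" "t < 1" using FC FB0 FAeq FA by (simp_all add: t_def)
    have "x = (1 - t) *\<^sub>R y + t *\<^sub>R z"
    proof -
      have 1: "1 - t = F B0 / F A" using FAeq FA by (simp add: t_def field_simps)
      have "x$i = ((1 - t) *\<^sub>R y + t *\<^sub>R z)$i" for i
      proof -
        have "(1/F A) * sgn (x$i) = sgn (x$i) / F A" by simp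
        then have xi: "x$i = sgn (x$i) / F A" using xcomp[of i] by linarith
        show ?thesis
        proof (cases "i \<in> B0")
          case True
          then have "i \<notin> C" by (simp add: C_def)
          then show ?thesis using True xi FB0 by (simp add: 1 y_def z_def)
        next
          case False
          show ?thesis
          proof (cases "i \<in> C")
            case True then show ?thesis using False xi FC by (simp add: t_def y_def z_def)
          next
            case False2: False
            then have "i \<notin> A" using False by (simp add: C_def)
            then show ?thesis using False False2 Ai by (simp add: y_def z_def)
          qed
        qed
      qed
      then show ?thesis by (simp add: vec_eq_iff)
    qed
    then show False using not_extreme[OF inK ne t] ext by simp
    qed
  qed
  show ?thesis using sv sA st ins xs by blast
qed


theorem proposition2:
  fixes F :: "'n::finite set \<Rightarrow> real" and x :: "real^'n"
  assumes "submodular F"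
    and "nondecreasing_setfun F"
    and "F {} = 0"
    and "\<And>k. F {k} > 0"
  shows "x extreme_point_of {w. lovasz_ext F (vabs w) \<le> 1} \<longleftrightarrow>
    (\<exists>s A. (\<forall>i. s $ i \<in> {-1, 0, 1}) \<and> supp s = A \<and>
       stable_set F A \<and> inseparable_set F A \<and> x = (1 / F A) *\<^sub>R s)"
proof
  assume "x extreme_point_of {w. lovasz_ext F (vabs w) \<le> 1}"
  then show "\<exists>s A. (\<forall>i. s $ i \<in> {-1, 0, 1}) \<and> supp s = A \<and>
       stable_set F A \<and> inseparable_set F A \<and> x = (1 / F A) *\<^sub>R s"
    using extreme_form[OF assms] by blast
next
  assume "\<exists>s A. (\<forall>i. s $ i \<in> {-1, 0, 1}) \<and> supp s = A \<and>
       stable_set F A \<and> inseparable_set F A \<and> x = (1 / F A) *\<^sub>R s"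
  then obtain s A where h: "\<forall>i. s $ i \<in> {-1, 0, 1}" "supp s = A" "stable_set F A"
    "inseparable_set F A" "x = (1 / F A) *\<^sub>R s" by blast
  show "x extreme_point_of {w. lovasz_ext F (vabs w) \<le> 1}"
    by (rule form_extreme[OF assms h])
qed

end
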